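(* Let $V$ be a grading-restricted vertex algebra, $W$ a $V$-module, $n\in\mathbb Z_+$, and let $\Phi:V^{\otimes n}\to\widetilde W_{z_1,\dots,z_n}$ be a linear map having the $L(-1)$-derivative property. Then: (a) for $v_1,\dots,v_n\in V$, $w'\in W'$, $(z_1,\dots,z_n)\in F_n\mathbb C$ and $z\in\mathbb C$, $$\langle w',e^{zL_W(-1)}\Phi(v_1\otimes\cdots\otimes v_n)(z_1,\dots,z_n)\rangle=\langle w',\Phi(v_1\otimes\cdots\otimes v_n)(z_1+z,\dots,z_n+z)\rangle;$$ (b) for $v_1,\dots,v_n\in V$, $w'\in W'$, $(z_1,\dots,z_n)\in F_n\mathbb C$, $1\le i\le n$ and $z\in\mathbb C$ with $(z_1,\dots,z_{i-1},z_i+z,z_{i+1},\dots,z_n)\in F_n\mathbb C$, the power series expansion in $z$ of $\langle w',\Phi(v_1\otimes\cdots\otimes v_n)(z_1,\dots,z_{i-1},z_i+z,z_{i+1},\dots,z_n)\rangle$ equals the power series $\langle w',\Phi(v_1\otimes\cdots\otimes v_{i-1}\otimes e^{zL_V(-1)}v_i\otimes v_{i+1}\otimes\cdots\otimes v_n)(z_1,\dots,z_n)\rangle$ in $z$; in particular the latter power series converges absolutely to the former function in the disk $|z|<\min_{j\neq k}|z_j-z_k|$.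
   Context: $V$ is a grading-restricted vertex algebra over $\mathbb C$ with vertex operator map $Y_V$, vacuum $\mathbf 1$ and operator $L_V(-1)$ ($L_V(-1)u$ is the coefficient of $x$ in $Y_V(u,x)\mathbf 1$). $W=\coprod_{n\in\mathbb C}W_{(n)}$ is a grading-restricted generalized $V$-module ($W_{(n)}=0$ for $\mathrm{Re}\,n$ sufficiently negative) with vertex operator map $Y_W$ and operators $L_W(0)$, $L_W(-1)$, where $L_W(-1)$ raises weights by $1$. $W'=\coprod_nW_{(n)}^*$, $\overline W=\prod_nW_{(n)}$, $\langle\cdot,\cdot\rangle$ the pairing; $e^{zL_W(-1)}$ is a well-defined operator on $\overline W$. $F_n\mathbb C=\{(z_1,\dots,z_n)\in\mathbb C^n:z_i\ne z_j\ (i\ne j)\}$. $\widetilde W_{z_1,\dots,z_n}$ is the space of maps $f:F_n\mathbb C\to\overline W$ such that $\langle w',f(z_1,\dots,z_n)\rangle$ is a rational function with only possible poles at $z_i=z_j$ ($i\ne j$) for every $w'\in W'$. A linear map $\Phi:V^{\otimes n}\to\widetilde W_{z_1,\dots,z_n}$ has the $L(-1)$-derivative property if (i) $\frac{\partial}{\partial z_i}\langle w',\Phi(v_1\otimes\cdots\otimes v_n)(z_1,\dots,z_n)\rangle=\langle w',\Phi(v_1\otimes\cdots\otimes v_{i-1}\otimes L_V(-1)v_i\otimes v_{i+1}\otimes\cdots\otimes v_n)(z_1,\dots,z_n)\rangle$ for all $i$, $v_j\in V$, $w'\in W'$, and (ii) $\big(\sum_{i=1}^n\frac{\partial}{\partial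 z_i}\big)\langle w',\Phi(v_1\otimes\cdots\otimes v_n)(z_1,\dots,z_n)\rangle=\langle w',L_W(-1)\Phi(v_1\otimes\cdots\otimes v_n)(z_1,\dots,z_n)\rangle$. *)

theory Defs
  imports "HOL-Analysis.Analysis"
begin

text \<open>There is no class of complex vector spaces in the distribution, so a complex
vector space is a type together with a scalar multiplication s :: complex => 'a => 'a
satisfying the locale vector_space s.  Complex itself is a complex vector space via (*).\<close>

definition fin_dim :: "(complex \<Rightarrow> 'a::ab_group_add \<Rightarrow> 'a) \<Rightarrow> 'a set \<Rightarrow> bool" where
  "fin_dim s S \<longleftrightarrow> (\<exists>B. finite B \<and> S \<subseteq> module.span s B)"

definition graded_direct_sum :: "(complex \<Rightarrow> 'a::ab_group_add \<Rightarrow> 'a) \<Rightarrow> ('i \<Rightarrow> 'a set) \<Rightarrow> bool" where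
  "graded_direct_sum s G \<longleftrightarrow>
     (\<forall>n. module.subspace s (G n)) \<and>
     (\<forall>w. \<exists>!c. (\<forall>n. c n \<in> G n) \<and> finite {n. c n \<noteq> 0} \<and> w = sum c {n. c n \<noteq> 0})"

text \<open>Y u v n is the mode u_n v, i.e. Y(u,x)v = sum_n (u_n v) x^(-n-1).\<close>

definition Jacobi_modes ::
  "(complex \<Rightarrow> 'w::ab_group_add \<Rightarrow> 'w) \<Rightarrow> ('v \<Rightarrow> 'v \<Rightarrow> int \<Rightarrow> 'v) \<Rightarrow> ('v \<Rightarrow> 'w \<Rightarrow> int \<Rightarrow> 'w)
     \<Rightarrow> 'v \<Rightarrow> 'v \<Rightarrow> 'w \<Rightarrow> bool" where
  "Jacobi_modes s YV YW u v w \<longleftrightarrow>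
    (\<forall>l m n::int. \<exists>K0. \<forall>K\<ge>K0.
       (\<Sum>i<K. s ((of_int m :: complex) gchoose i)
                   (YW (YV u v (l + int i)) w (m + n - int i)))
     = (\<Sum>i<K. s ((-1) ^ i * ((of_int l :: complex) gchoose i))
                   (YW u (YW v w (n + int i)) (l + m - int i)
                    - s ((-1) powi l) (YW v (YW u w (m + int i)) (l + n - int i)))))"

definition grading_restricted_VA ::
  "(complex \<Rightarrow> 'v::ab_group_add \<Rightarrow> 'v) \<Rightarrow> (int \<Rightarrow> 'v set) \<Rightarrow> ('v \<Rightarrow> 'v \<Rightarrow> int \<Rightarrow> 'v) \<Rightarrow> 'v \<Rightarrow> bool" where
  "grading_restricted_VA s G Y one \<longleftrightarrow>
     vector_space s \<and> graded_direct_sum s G \<and> (\<forall>n. fin_dim s (G n)) \<and>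
     (\<exists>N. \<forall>n<N. G n = {0}) \<and>
     (\<forall>v n. Vector_Spaces.linear s s (\<lambda>u. Y u v n)) \<and>
     (\<forall>u n. Vector_Spaces.linear s s (\<lambda>v. Y u v n)) \<and>
     (\<forall>u v. \<exists>N. \<forall>n\<ge>N. Y u v n = 0) \<and>
     (\<forall>m k n u v. u \<in> G m \<longrightarrow> v \<in> G k \<longrightarrow> Y u v n \<in> G (m + k - n - 1)) \<and>
     one \<in> G 0 \<and>
     (\<forall>v n. Y one v n = (if n = -1 then v else 0)) \<and>
     (\<forall>u n. n \<ge> 0 \<longrightarrow> Y u one n = 0) \<and> (\<forall>u. Y u one (-1) = u) \<and>
     (\<forall>u v w. Jacobi_modes s Y Y u v w)"

text \<open>L_V(-1)u is the coefficient of x in Y(u,x)1, i.e. the mode u_{-2} 1.\<close>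
definition LVm1 :: "('v \<Rightarrow> 'v \<Rightarrow> int \<Rightarrow> 'v) \<Rightarrow> 'v \<Rightarrow> 'v \<Rightarrow> 'v" where
  "LVm1 Y one u = Y u one (-2)"

definition grading_restricted_gen_module ::
  "(complex \<Rightarrow> 'v::ab_group_add \<Rightarrow> 'v) \<Rightarrow> (int \<Rightarrow> 'v set) \<Rightarrow> ('v \<Rightarrow> 'v \<Rightarrow> int \<Rightarrow> 'v) \<Rightarrow> 'v \<Rightarrow>
   (complex \<Rightarrow> 'w::ab_group_add \<Rightarrow> 'w) \<Rightarrow> (complex \<Rightarrow> 'w set) \<Rightarrow> ('v \<Rightarrow> 'w \<Rightarrow> int \<Rightarrow> 'w) \<Rightarrow>
   ('w \<Rightarrow> 'w) \<Rightarrow> ('w \<Rightarrow> 'w) \<Rightarrow> bool" where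
  "grading_restricted_gen_module sV GV Y one sW GW YW L0 L1 \<longleftrightarrow>
     vector_space sW \<and> graded_direct_sum sW GW \<and> (\<forall>n. fin_dim sW (GW n)) \<and>
     (\<exists>N::real. \<forall>n. Re n < N \<longrightarrow> GW n = {0}) \<and>
     (\<forall>w n. Vector_Spaces.linear sV sW (\<lambda>u. YW u w n)) \<and>
     (\<forall>u n. Vector_Spaces.linear sW sW (\<lambda>w. YW u w n)) \<and>
     (\<forall>u w. \<exists>N. \<forall>n\<ge>N. YW u w n = 0) \<and>
     (\<forall>m k n u w. u \<in> GV m \<longrightarrow> w \<in> GW k \<longrightarrow>
                  YW u w n \<in> GW (of_int m + k - of_int n - 1)) \<and>
     (\<forall>w n. YW one w n = (if n = -1 then w else 0)) \<and>
     (\<forall>u v w. Jacobi_modes sW Y YW u v w) \<and>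
     Vector_Spaces.linear sW sW L0 \<and>
     (\<forall>n. L0 ` GW n \<subseteq> GW n) \<and>
     (\<forall>n w. w \<in> GW n \<longrightarrow> (\<exists>K. ((\<lambda>x. L0 x - sW n x) ^^ K) w = 0)) \<and>
     (\<forall>m u w k. u \<in> GV m \<longrightarrow>
        L0 (YW u w k) - YW u (L0 w) k = sW (of_int m - of_int k - 1) (YW u w k)) \<and>
     Vector_Spaces.linear sW sW L1 \<and>
     (\<forall>n. L1 ` GW n \<subseteq> GW (n + 1)) \<and>
     (\<forall>u w k. YW (LVm1 Y one u) w k = sW (- of_int k) (YW u w (k - 1))) \<and>
     (\<forall>u w k. L1 (YW u w k) - YW u (L1 w) k = YW (LVm1 Y one u) w k)"

text \<open>Elements of overline W = prod_n W_(n) are represented as functions wb with wb n in W_(n).\<close>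
definition in_Wbar :: "(complex \<Rightarrow> 'w set) \<Rightarrow> (complex \<Rightarrow> 'w) \<Rightarrow> bool" where
  "in_Wbar GW wb \<longleftrightarrow> (\<forall>n. wb n \<in> GW n)"

text \<open>Elements of W' = coprod_n W_(n)^* are linear functionals on W vanishing on all but
finitely many homogeneous subspaces.\<close>
definition in_Wdual :: "(complex \<Rightarrow> 'w::ab_group_add \<Rightarrow> 'w) \<Rightarrow> (complex \<Rightarrow> 'w set) \<Rightarrow> ('w \<Rightarrow> complex) \<Rightarrow> bool" where
  "in_Wdual sW GW w' \<longleftrightarrow> Vector_Spaces.linear sW (*) w' \<and>
     (\<exists>S. finite S \<and> (\<forall>n. n \<notin> S \<longrightarrow> (\<forall>x\<in>GW n. w' x = 0)))"

definition pairing :: "(complex \<Rightarrow> 'w set) \<Rightarrow> ('w \<Rightarrow> complex) \<Rightarrow> (complex \<Rightarrow> 'w) \<Rightarrow> complex" where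
  "pairing GW w' wb = (\<Sum>n\<in>{n. \<exists>x\<in>GW n. w' x \<noteq> 0}. w' (wb n))"

definition Lbar :: "('w \<Rightarrow> 'w) \<Rightarrow> (complex \<Rightarrow> 'w) \<Rightarrow> (complex \<Rightarrow> 'w)" where
  "Lbar L1 wb = (\<lambda>n. L1 (wb (n - 1)))"

text \<open>e^{z L_W(-1)} acting on overline W; the sum in each component is finite because
W is grading restricted.\<close>
definition expLbar :: "(complex \<Rightarrow> 'w::ab_group_add \<Rightarrow> 'w) \<Rightarrow> ('w \<Rightarrow> 'w) \<Rightarrow> complex \<Rightarrow>
     (complex \<Rightarrow> 'w) \<Rightarrow> (complex \<Rightarrow> 'w)" where
  "expLbar sW L1 z wb = (\<lambda>n. \<Sum>k\<in>{k::nat. wb (n - of_nat k) \<noteq> 0}.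
        sW (z ^ k / fact k) ((L1 ^^ k) (wb (n - of_nat k))))"

text \<open>n-tuples are indexed by a finite type 'n, n = CARD('n).\<close>
definition vupd :: "'a ^ 'n \<Rightarrow> 'n \<Rightarrow> 'a \<Rightarrow> 'a ^ 'n" where
  "vupd v i x = (\<chi> j. if j = i then x else v $ j)"

definition Fconf :: "(complex ^ 'n) set" where
  "Fconf = {z. \<forall>i j. i \<noteq> j \<longrightarrow> z $ i \<noteq> z $ j}"

definition rational_Fn :: "(complex ^ 'n \<Rightarrow> complex) \<Rightarrow> bool" where
  "rational_Fn f \<longleftrightarrow> (\<exists>A c N. finite (A :: ('n \<Rightarrow> nat) set) \<and>
     (\<forall>z\<in>Fconf. f z = (\<Sum>\<alpha>\<in>A. c \<alpha> * (\<Prod>i\<in>UNIV. (z $ i) ^ \<alpha> i)) /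
                        (\<Prod>i\<in>UNIV. \<Prod>j\<in>UNIV. if i = j then 1 else (z $ i - z $ j) ^ N)))"

definition in_Wtilde :: "(complex \<Rightarrow> 'w::ab_group_add \<Rightarrow> 'w) \<Rightarrow> (complex \<Rightarrow> 'w set) \<Rightarrow>
     (complex ^ 'n \<Rightarrow> complex \<Rightarrow> 'w) \<Rightarrow> bool" where
  "in_Wtilde sW GW f \<longleftrightarrow> (\<forall>z\<in>Fconf. in_Wbar GW (f z)) \<and>
     (\<forall>w'. in_Wdual sW GW w' \<longrightarrow> rational_Fn (\<lambda>z. pairing GW w' (f z)))"

text \<open>A linear map V^{\<otimes> n} \<rightarrow> W-tilde is represented (universal property of the tensor
product) by a map on n-tuples that is linear in each slot.\<close>
definition multilinear_Phi :: "(complex \<Rightarrow> 'v::ab_group_add \<Rightarrow> 'v) \<Rightarrow> (complex \<Rightarrow> 'w::ab_group_add \<Rightarrow> 'w) \<Rightarrow>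
     ('v ^ 'n \<Rightarrow> complex ^ 'n \<Rightarrow> complex \<Rightarrow> 'w) \<Rightarrow> bool" where
  "multilinear_Phi sV sW Phi \<longleftrightarrow> (\<forall>v i a x y z m.
     Phi (vupd v i (sV a x + y)) z m = sW a (Phi (vupd v i x) z m) + Phi (vupd v i y) z m)"

definition L_derivative_property ::
  "(complex \<Rightarrow> 'w::ab_group_add \<Rightarrow> 'w) \<Rightarrow> (complex \<Rightarrow> 'w set) \<Rightarrow> ('v \<Rightarrow> 'v) \<Rightarrow> ('w \<Rightarrow> 'w) \<Rightarrow>
   ('v ^ 'n \<Rightarrow> complex ^ 'n \<Rightarrow> complex \<Rightarrow> 'w) \<Rightarrow> bool" where
  "L_derivative_property sW GW LV LW Phi \<longleftrightarrow>
     (\<forall>v w' z i. in_Wdual sW GW w' \<longrightarrow> z \<in> Fconf \<longrightarrow>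
        ((\<lambda>t. pairing GW w' (Phi v (vupd z i t))) has_field_derivative
           pairing GW w' (Phi (vupd v i (LV (v $ i))) z)) (at (z $ i))) \<and>
     (\<forall>v w' z. in_Wdual sW GW w' \<longrightarrow> z \<in> Fconf \<longrightarrow>
        (\<Sum>i\<in>UNIV. deriv (\<lambda>t. pairing GW w' (Phi v (vupd z i t))) (z $ i))
          = pairing GW w' (Lbar LW (Phi v z)))"

end

theory Submission
  imports Defs "HOL-Complex_Analysis.Complex_Analysis"
begin
lemma differentiable_prod':
  fixes f :: "'i \<Rightarrow> 'a::real_normed_vector \<Rightarrow> 'b::real_normed_field"
  assumes a: "\<And>i. i \<in> I \<Longrightarrow> f i differentiable (at x within S)"
  shows  "(\<lambda>x. \<Prod>i\<in>I. f i x) differentiable (at x within S)"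
proof -
  have "\<forall>i\<in>I. \<exists>D. (f i has_derivative D) (at x within S)" using a by (auto simp: differentiable_def)
  then obtain D where "\<forall>i\<in>I. (f i has_derivative D i) (at x within S)" by (rule bchoice[elim_format]) blast
  then show ?thesis unfolding differentiable_def by (blast intro: has_derivative_prod)
qed
lemma nth_differentiable: "(\<lambda>z::complex^'n::finite. z $ i) differentiable F"
  by (rule bounded_linear_imp_differentiable) (rule bounded_linear_vec_nth)
lemma open_Fconf: "open (Fconf :: (complex^'n::finite) set)"
proof -
  have "Fconf = (\<Inter>p\<in>{p::'n\<times>'n. fst p \<noteq> snd p}. {z::complex^'n. z $ fst p \<noteq> z $ snd p})"
    unfolding Fconf_def by auto
  moreover have "open (\<Inter>p\<in>{p::'n\<times>'n. fst p \<noteq> snd p}. {z::complex^'n. z $ fst p \<noteq> z $ snd p})"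
  proof (rule open_INT)
    show "finite {p::'n\<times>'n. fst p \<noteq> snd p}" by (rule finite_subset[of _ UNIV]) auto
    show "\<forall>p\<in>{p::'n\<times>'n. fst p \<noteq> snd p}. open {z::complex^'n. z $ fst p \<noteq> z $ snd p}"
      by (intro ballI open_Collect_neq linear_continuous_on bounded_linear_vec_nth)
  qed
  ultimately show ?thesis by simp
qed

lemma bl_chi: "bounded_linear (\<lambda>s::complex. (\<chi> j::'n::finite. if P j then s else 0))"
proof -
  have "linear (\<lambda>s::complex. (\<chi> j::'n::finite. if P j then s else 0))"
    by (rule linearI) (simp_all add: vec_eq_iff)
  then show ?thesis by (simp add: linear_conv_bounded_linear)
qed
lemma rat_differentiable: fixes A :: "('n::finite \<Rightarrow> nat) set" and z :: "complex^'n"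
  assumes "(\<Prod>i\<in>UNIV. \<Prod>j\<in>UNIV. if i = j then 1 else (z $ i - z $ j) ^ N) \<noteq> 0"
  shows "(\<lambda>z. (\<Sum>\<alpha>\<in>A. c \<alpha> * (\<Prod>i\<in>UNIV. (z $ i) ^ \<alpha> i)) /
                        (\<Prod>i\<in>UNIV. \<Prod>j\<in>UNIV. if i = j then 1 else (z $ i - z $ j) ^ N)) differentiable at z"
proof (rule differentiable_divide)
  show "(\<Prod>i\<in>UNIV. \<Prod>j\<in>UNIV. if i = j then 1 else (z $ i - z $ j) ^ N) \<noteq> 0" by (rule assms)
  show "(\<lambda>z. \<Sum>\<alpha>\<in>A. c \<alpha> * (\<Prod>i\<in>UNIV. (z $ i) ^ \<alpha> i)) differentiable at z"
  proof (cases "finite A")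
    case True
    show ?thesis
      by (rule differentiable_sum[OF True], intro ballI differentiable_mult differentiable_const differentiable_prod' differentiable_power nth_differentiable)
  qed simp
  show "(\<lambda>z. \<Prod>i\<in>UNIV. \<Prod>j\<in>UNIV. if i = j then 1 else (z $ i - z $ j) ^ N) differentiable at z"
  proof (intro differentiable_prod')
    fix i j :: 'n
    show "(\<lambda>z. if i = j then 1 else (z $ i - z $ j) ^ N) differentiable at z"
    proof (cases "i = j")
      case False
      then show ?thesis by (simp only: if_False) (intro differentiable_power differentiable_diff nth_differentiable)
    qed simp
  qed
qed

lemma vupd_split: "vupd (z::'a::monoid_add^'n::finite) i t = vupd z i 0 + (\<chi> j. if j = i then t else 0)"
  by (simp add: vupd_def vec_eq_iff)

lemma vupd_nth_same: "vupd z i (z $ i) = z"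
  by (simp add: vupd_def vec_eq_iff)

lemma vupd_vupd: "vupd (vupd v i x) i y = vupd v i y"
  by (simp add: vupd_def vec_eq_iff)

lemma vupd_nth: "vupd v i x $ i = x"
  by (simp add: vupd_def)

lemma diag_deriv:
  fixes F :: "complex^'n::finite \<Rightarrow> complex"
  assumes dF: "(F has_derivative D) (at z)"
    and pd: "\<And>i. ((\<lambda>t. F (vupd z i t)) has_field_derivative c i) (at (z$i))"
  shows "((\<lambda>t. F (z + (\<chi> j. t))) has_field_derivative (\<Sum>i\<in>UNIV. c i)) (at 0)"
proof -
  define Li where "Li i = (\<lambda>s::complex. (\<chi> j::'n. if j = i then s else 0))" for i
  have bD: "bounded_linear D" using dF by (rule has_derivative_bounded_linear)
  have DLi: "D (Li i s) = c i * s" for i s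
  proof -
    have bl: "bounded_linear (Li i)" unfolding Li_def by (rule bl_chi)
    have g: "((\<lambda>t. vupd z i 0 + Li i t) has_derivative (\<lambda>h. 0 + Li i h)) (at (z$i))"
      by (intro has_derivative_add has_derivative_const bounded_linear_imp_has_derivative bl)
    have eq1: "vupd z i 0 + Li i (z$i) = z"
      by (simp add: Li_def vupd_def vec_eq_iff)
    have "((F \<circ> (\<lambda>t. vupd z i 0 + Li i t)) has_derivative (D \<circ> (\<lambda>h. 0 + Li i h))) (at (z$i))"
      by (rule diff_chain_at[OF g]) (simp add: eq1 dF)
    moreover have "(F \<circ> (\<lambda>t. vupd z i 0 + Li i t)) = (\<lambda>t. F (vupd z i t))"
      by (rule ext) (simp add: Li_def flip: vupd_split)
    ultimately have "((\<lambda>t. F (vupd z i t)) has_derivative (D \<circ> (\<lambda>h. 0 + Li i h))) (at (z$i))" by simp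
    moreover have "((\<lambda>t. F (vupd z i t)) has_derivative (*) (c i)) (at (z$i))"
      using pd[of i] by (simp add: has_field_derivative_def)
    ultimately have "(D \<circ> (\<lambda>h. 0 + Li i h)) = (*) (c i)" by (rule has_derivative_unique)
    then show ?thesis by (metis add_0 comp_apply)
  qed
  have bl1: "bounded_linear (\<lambda>s::complex. (\<chi> j::'n. s))"
    using bl_chi[where P="\<lambda>j. True"] by simp
  have g: "((\<lambda>t. z + (\<chi> j::'n. t)) has_derivative (\<lambda>h. 0 + (\<chi> j. h))) (at 0)"
    by (intro has_derivative_add has_derivative_const bounded_linear_imp_has_derivative bl1)
  have "((F \<circ> (\<lambda>t. z + (\<chi> j::'n. t))) has_derivative (D \<circ> (\<lambda>h. 0 + (\<chi> j. h)))) (at 0)"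
  proof (rule diff_chain_at[OF g])
    have "z + (\<chi> j::'n. 0) = z" by (simp add: vec_eq_iff)
    then show "(F has_derivative D) (at (z + (\<chi> j::'n. 0)))" using dF by simp
  qed
  moreover have "(D \<circ> (\<lambda>h. 0 + (\<chi> j. h))) = (*) (\<Sum>i\<in>UNIV. c i)"
  proof (rule ext)
    fix h :: complex
    have "(\<chi> j::'n. h) = (\<Sum>i\<in>UNIV. Li i h)"
      by (simp add: Li_def vec_eq_iff)
    then have "D (\<chi> j::'n. h) = (\<Sum>i\<in>UNIV. D (Li i h))"
      by (simp add: linear_sum[OF bounded_linear.linear[OF bD]])
    also have "\<dots> = (\<Sum>i\<in>UNIV. c i) * h" by (simp add: DLi sum_distrib_right)
    finally show "(D \<circ> (\<lambda>h. 0 + (\<chi> j. h))) h = (\<Sum>i\<in>UNIV. c i) * h" by simp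
  qed
  ultimately show ?thesis by (simp add: has_field_derivative_def comp_def)
qed

lemma rational_differentiable:
  fixes f :: "complex^'n::finite \<Rightarrow> complex"
  assumes "rational_Fn f" "z \<in> Fconf"
  shows "f differentiable (at z)"
proof -
  obtain A c N where A: "finite (A :: ('n \<Rightarrow> nat) set)" and
    eq: "\<forall>z\<in>Fconf. f z = (\<Sum>\<alpha>\<in>A. c \<alpha> * (\<Prod>i\<in>UNIV. (z $ i) ^ \<alpha> i)) /
                        (\<Prod>i\<in>UNIV. \<Prod>j\<in>UNIV. if i = j then 1 else (z $ i - z $ j) ^ N)"
    using assms(1) unfolding rational_Fn_def by blast
  have nz: "(\<Prod>i\<in>UNIV. \<Prod>j\<in>UNIV. if i = j then 1 else (z $ i - z $ j) ^ N) \<noteq> 0"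
    using assms(2) by (simp add: Fconf_def prod_zero_iff)
  obtain D where "((\<lambda>z. (\<Sum>\<alpha>\<in>A. c \<alpha> * (\<Prod>i\<in>UNIV. (z $ i) ^ \<alpha> i)) /
                        (\<Prod>i\<in>UNIV. \<Prod>j\<in>UNIV. if i = j then 1 else (z $ i - z $ j) ^ N)) has_derivative D) (at z)"
    using rat_differentiable[OF nz] unfolding differentiable_def by blast
  then have "(f has_derivative D) (at z)"
    by (rule has_derivative_transform_within_open[OF _ open_Fconf assms(2)]) (simp add: eq)
  then show ?thesis unfolding differentiable_def by blast
qed

lemma taylor_iter:
  fixes g :: "nat \<Rightarrow> complex \<Rightarrow> complex"
  assumes S: "open S" and d: "\<And>k t. t \<in> S \<Longrightarrow> (g k has_field_derivative g (Suc k) t) (at t)"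
  shows "t \<in> S \<Longrightarrow> (deriv ^^ k) (g 0) t = g k t"
proof (induction k arbitrary: t)
  case 0 then show ?case by simp
next
  case (Suc k)
  have "((deriv ^^ k) (g 0) has_field_derivative g (Suc k) t) (at t)"
    by (rule has_field_derivative_transform_within_open[OF d[OF Suc.prems] S Suc.prems])
       (simp add: Suc.IH)
  then show ?case by (simp add: DERIV_imp_deriv)
qed

lemma lin_add: "Vector_Spaces.linear s1 s2 f \<Longrightarrow> f (x + y) = f x + f y"
  by (simp add: Vector_Spaces.linear_iff)
lemma lin_scale: "Vector_Spaces.linear s1 s2 f \<Longrightarrow> f (s1 c x) = s2 c (f x)"
  by (simp add: Vector_Spaces.linear_iff)
lemma lin_zero: "Vector_Spaces.linear s1 s2 f \<Longrightarrow> f 0 = 0"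
proof -
  assume "Vector_Spaces.linear s1 s2 f"
  then have "f (0 + 0) = f 0 + f 0" by (rule lin_add)
  then show "f 0 = 0" by simp
qed
lemma lin_sum: "Vector_Spaces.linear s1 s2 f \<Longrightarrow> f (\<Sum>i\<in>S. g i) = (\<Sum>i\<in>S. f (g i))"
proof (induction S rule: infinite_finite_induct)
  case (infinite A) then show ?case by (simp add: lin_zero)
next
  case empty then show ?case by (simp add: lin_zero)
next
  case (insert x F) then show ?case by (simp add: lin_add)
qed
lemma lin_funpow: "Vector_Spaces.linear s s L \<Longrightarrow> Vector_Spaces.linear s s (L ^^ k)"
proof (induction k)
  case 0 then show ?case by (simp add: Vector_Spaces.linear_iff id_def[symmetric])
next
  case (Suc k)
  have "Vector_Spaces.linear s s (L \<circ> (L ^^ k))"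
    by (rule Vector_Spaces.linear_compose[OF Suc.IH[OF Suc.prems] Suc.prems])
  then show ?case by (simp only: funpow.simps)
qed

lemma funpow_maps:
  fixes GW :: "complex \<Rightarrow> 'w set"
  assumes "\<forall>n. L ` GW n \<subseteq> GW (n + 1)"
  shows "x \<in> GW n \<Longrightarrow> (L ^^ k) x \<in> GW (n + of_nat k)"
proof (induction k)
  case 0 then show ?case by simp
next
  case (Suc k)
  then have "L ((L ^^ k) x) \<in> GW (n + of_nat k + 1)" using assms by blast
  moreover have "n + of_nat k + 1 = n + of_nat (Suc k)" by simp
  ultimately show ?case by simp
qed

lemma Wdual_comp:
  fixes GW :: "complex \<Rightarrow> 'w::ab_group_add set"
  assumes W: "in_Wdual sW GW w'" and lin: "Vector_Spaces.linear sW sW L"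
    and maps: "\<forall>n. L ` GW n \<subseteq> GW (n + 1)"
  shows "in_Wdual sW GW (\<lambda>x. w' ((L ^^ k) x))"
proof -
  have l1: "Vector_Spaces.linear sW (*) w'" using W by (simp add: in_Wdual_def)
  obtain S where S: "finite S" "\<forall>n. n \<notin> S \<longrightarrow> (\<forall>x\<in>GW n. w' x = 0)"
    using W by (auto simp: in_Wdual_def)
  have "Vector_Spaces.linear sW (*) (w' \<circ> (L ^^ k))"
    by (rule Vector_Spaces.linear_compose[OF lin_funpow[OF lin] l1])
  then have l: "Vector_Spaces.linear sW (*) (\<lambda>x. w' ((L ^^ k) x))" by (simp add: comp_def)
  have "\<forall>n. n \<notin> (\<lambda>m. m - of_nat k) ` S \<longrightarrow> (\<forall>x\<in>GW n. w' ((L ^^ k) x) = 0)"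
  proof (intro allI impI ballI)
    fix n x assume n: "n \<notin> (\<lambda>m. m - of_nat k) ` S" and x: "x \<in> GW n"
    have "n + of_nat k \<notin> S" using n by (metis add_diff_cancel image_eqI)
    moreover have "(L ^^ k) x \<in> GW (n + of_nat k)" by (rule funpow_maps[OF maps x])
    ultimately show "w' ((L ^^ k) x) = 0" using S(2) by blast
  qed
  then show ?thesis using l S(1) unfolding in_Wdual_def by blast
qed

definition supp :: "(complex \<Rightarrow> 'w set) \<Rightarrow> ('w \<Rightarrow> complex) \<Rightarrow> complex set" where
  "supp GW w' = {n. \<exists>x\<in>GW n. w' x \<noteq> 0}"

lemma pairing_supp: "pairing GW w' wb = (\<Sum>n\<in>supp GW w'. w' (wb n))"
  by (simp add: pairing_def supp_def)

lemma finite_supp: "in_Wdual sW GW w' \<Longrightarrow> finite (supp GW w')"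
proof -
  assume "in_Wdual sW GW w'"
  then obtain S where S: "finite S" "\<forall>n. n \<notin> S \<longrightarrow> (\<forall>x\<in>GW n. w' x = 0)"
    by (auto simp: in_Wdual_def)
  have "supp GW w' \<subseteq> S" using S(2) by (auto simp: supp_def)
  then show ?thesis using S(1) by (rule finite_subset)
qed

lemma pairing_shift:
  fixes GW :: "complex \<Rightarrow> 'w::ab_group_add set"
  assumes W: "in_Wdual sW GW w'" and lin: "Vector_Spaces.linear sW sW L"
    and maps: "\<forall>n. L ` GW n \<subseteq> GW (n + 1)" and X: "in_Wbar GW X"
  shows "(\<Sum>n\<in>supp GW w'. w' ((L ^^ k) (X (n - of_nat k)))) = pairing GW (\<lambda>x. w' ((L ^^ k) x)) X"
proof -
  define f where "f m = w' ((L ^^ k) (X m))" for m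
  define A where "A = (\<lambda>n. n - of_nat k) ` supp GW w'"
  define B where "B = supp GW (\<lambda>x. w' ((L ^^ k) x))"
  have fA: "finite A" unfolding A_def using finite_supp[OF W] by simp
  have fB: "finite B" unfolding B_def by (rule finite_supp[OF Wdual_comp[OF W lin maps]])
  have "(\<Sum>n\<in>supp GW w'. w' ((L ^^ k) (X (n - of_nat k)))) = (\<Sum>m\<in>A. f m)"
    unfolding A_def f_def by (subst sum.reindex) (auto simp: inj_on_def)
  also have "\<dots> = (\<Sum>m\<in>A \<union> B. f m)"
  proof (rule sum.mono_neutral_left)
    show "\<forall>i\<in>A \<union> B - A. f i = 0"
    proof
      fix m assume m: "m \<in> A \<union> B - A"
      then have "m + of_nat k \<notin> supp GW w'" unfolding A_def by (metis DiffD2 add_diff_cancel image_eqI)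
      moreover have "(L ^^ k) (X m) \<in> GW (m + of_nat k)"
        using X funpow_maps[OF maps] by (simp add: in_Wbar_def)
      ultimately show "f m = 0" unfolding f_def supp_def by blast
    qed
  qed (use fA fB in auto)
  also have "\<dots> = (\<Sum>m\<in>B. f m)"
  proof (rule sum.mono_neutral_right)
    show "\<forall>i\<in>A \<union> B - B. f i = 0"
    proof
      fix m assume m: "m \<in> A \<union> B - B"
      then show "f m = 0" using X unfolding f_def B_def supp_def in_Wbar_def by blast
    qed
  qed (use fA fB in auto)
  also have "\<dots> = pairing GW (\<lambda>x. w' ((L ^^ k) x)) X"
    unfolding B_def f_def by (simp add: pairing_supp)
  finally show ?thesis .
qed

lemma vanish:
  fixes GW :: "complex \<Rightarrow> 'w::ab_group_add set"
  assumes W: "in_Wdual sW GW w'" and lin: "Vector_Spaces.linear sW sW L"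
    and maps: "\<forall>n. L ` GW n \<subseteq> GW (n + 1)"
    and low: "\<exists>N::real. \<forall>n. Re n < N \<longrightarrow> GW n = {0}"
  shows "\<exists>K. \<forall>k\<ge>K. \<forall>n. \<forall>x\<in>GW n. w' ((L ^^ k) x) = 0"
proof -
  obtain S where S: "finite S" "\<forall>n. n \<notin> S \<longrightarrow> (\<forall>x\<in>GW n. w' x = 0)"
    using W by (auto simp: in_Wdual_def)
  obtain N :: real where N: "\<forall>n. Re n < N \<longrightarrow> GW n = {0}" using low by blast
  have l1: "Vector_Spaces.linear sW (*) w'" using W by (simp add: in_Wdual_def)
  define B where "B = (\<Sum>s\<in>S. \<bar>Re s\<bar>)"
  have sB: "Re s \<le> B" if "s \<in> S" for s
  proof -
    have "\<bar>Re s\<bar> \<le> B" unfolding B_def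
      by (rule member_le_sum[OF that _ S(1)]) simp
    then show ?thesis by simp
  qed
  define K where "K = nat \<lceil>B - N\<rceil> + 1"
  show ?thesis
  proof (intro exI allI impI ballI)
    fix k n x assume k: "K \<le> k" and x: "x \<in> GW n"
    show "w' ((L ^^ k) x) = 0"
    proof (cases "n + of_nat k \<in> S")
      case False
      then show ?thesis using S(2) funpow_maps[OF maps x] by blast
    next
      case True
      then have "Re (n + of_nat k) \<le> B" by (rule sB)
      moreover have "real k > B - N" using k unfolding K_def by linarith
      ultimately have "Re n < N" by simp
      then have "x = 0" using N x by blast
      then show ?thesis by (simp add: lin_zero[OF lin_funpow[OF lin]] lin_zero[OF l1])
    qed
  qed
qed

lemma hderiv:
  fixes sW :: "complex \<Rightarrow> 'w::ab_group_add \<Rightarrow> 'w" and GW :: "complex \<Rightarrow> 'w set"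
    and Phi :: "'v ^ 'n::finite \<Rightarrow> complex ^ 'n \<Rightarrow> complex \<Rightarrow> 'w"
  assumes codom: "\<And>v. in_Wtilde sW GW (Phi v)"
    and Lder: "L_derivative_property sW GW LV L1 Phi"
    and linL1: "Vector_Spaces.linear sW sW L1" and maps: "\<forall>n. L1 ` GW n \<subseteq> GW (n + 1)"
    and W0: "in_Wdual sW GW w'" and zz: "zz \<in> Fconf"
  shows "((\<lambda>t. pairing GW (\<lambda>x. w' ((L1 ^^ k) x)) (Phi v (zz + (\<chi> j. t)))) has_field_derivative
           pairing GW (\<lambda>x. w' ((L1 ^^ Suc k) x)) (Phi v (zz + (\<chi> j. t)))) (at t)"
proof -
  define W where "W = (\<lambda>x. w' ((L1 ^^ k) x))"
  have Wd: "in_Wdual sW GW W" unfolding W_def by (rule Wdual_comp[OF W0 linL1 maps])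
  define z' where "z' = zz + (\<chi> j. t)"
  have z': "z' \<in> Fconf" using zz by (simp add: Fconf_def z'_def)
  define F where "F = (\<lambda>z. pairing GW W (Phi v z))"
  have "rational_Fn F" using codom[of v] Wd unfolding F_def in_Wtilde_def by blast
  then obtain D where dF: "(F has_derivative D) (at z')"
    using rational_differentiable[OF _ z'] unfolding differentiable_def by blast
  define c where "c i = pairing GW W (Phi (vupd v i (LV (v $ i))) z')" for i
  have pd: "((\<lambda>t. F (vupd z' i t)) has_field_derivative c i) (at (z'$i))" for i
    using Lder Wd z' unfolding L_derivative_property_def F_def c_def by blast
  have X: "in_Wbar GW (Phi v z')" using codom[of v] z' unfolding in_Wtilde_def by blast
  have "(\<Sum>i\<in>UNIV. c i) = (\<Sum>i\<in>UNIV. deriv (\<lambda>t. F (vupd z' i t)) (z'$i))"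
    by (rule sum.cong[OF refl], rule sym, rule DERIV_imp_deriv, rule pd)
  also have "\<dots> = pairing GW W (Lbar L1 (Phi v z'))"
    using Lder Wd z' unfolding L_derivative_property_def F_def by blast
  also have "\<dots> = (\<Sum>n\<in>supp GW W. W ((L1 ^^ 1) (Phi v z' (n - of_nat 1))))"
    by (simp add: pairing_supp Lbar_def)
  also have "\<dots> = pairing GW (\<lambda>x. W ((L1 ^^ 1) x)) (Phi v z')"
    by (rule pairing_shift[OF Wd linL1 maps X])
  also have "\<dots> = pairing GW (\<lambda>x. w' ((L1 ^^ Suc k) x)) (Phi v z')"
    by (simp add: W_def funpow_swap1)
  finally have csum: "(\<Sum>i\<in>UNIV. c i) = pairing GW (\<lambda>x. w' ((L1 ^^ Suc k) x)) (Phi v z')" .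
  have "((\<lambda>s. F (z' + (\<chi> j. s))) has_field_derivative (\<Sum>i\<in>UNIV. c i)) (at 0)"
    by (rule diag_deriv[OF dF pd])
  moreover have "(\<lambda>s. F (z' + (\<chi> j. s))) = (\<lambda>s. pairing GW W (Phi v (zz + (\<chi> j. s + t))))"
  proof (rule ext)
    fix s
    have "z' + (\<chi> j. s) = zz + (\<chi> j. s + t)" by (simp add: z'_def vec_eq_iff algebra_simps)
    then show "F (z' + (\<chi> j. s)) = pairing GW W (Phi v (zz + (\<chi> j. s + t)))" by (simp add: F_def)
  qed
  ultimately have "((\<lambda>s. pairing GW W (Phi v (zz + (\<chi> j. s + t)))) has_field_derivative
      pairing GW (\<lambda>x. w' ((L1 ^^ Suc k) x)) (Phi v z')) (at 0)" using csum by simp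
  then have "((\<lambda>t. pairing GW W (Phi v (zz + (\<chi> j. t)))) has_field_derivative
      pairing GW (\<lambda>x. w' ((L1 ^^ Suc k) x)) (Phi v z')) (at (0 + t))"
    by (subst DERIV_shift) simp
  then show ?thesis by (simp add: W_def z'_def)
qed

lemma partA:
  fixes sW :: "complex \<Rightarrow> 'w::ab_group_add \<Rightarrow> 'w" and GW :: "complex \<Rightarrow> 'w set"
    and Phi :: "'v ^ 'n::finite \<Rightarrow> complex ^ 'n \<Rightarrow> complex \<Rightarrow> 'w"
  assumes codom: "\<And>v. in_Wtilde sW GW (Phi v)"
    and Lder: "L_derivative_property sW GW LV L1 Phi"
    and linL1: "Vector_Spaces.linear sW sW L1" and maps: "\<forall>n. L1 ` GW n \<subseteq> GW (n + 1)"
    and low: "\<exists>N::real. \<forall>n. Re n < N \<longrightarrow> GW n = {0}"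
    and W0: "in_Wdual sW GW w'" and zz: "zz \<in> Fconf"
  shows "pairing GW w' (expLbar sW L1 z (Phi v zz)) = pairing GW w' (Phi v (\<chi> j. zz $ j + z))"
proof -
  define hk where "hk k t = pairing GW (\<lambda>x. w' ((L1 ^^ k) x)) (Phi v (zz + (\<chi> j. t)))" for k t
  have hd: "(hk k has_field_derivative hk (Suc k) t) (at t)" for k t
    unfolding hk_def by (rule hderiv[OF codom Lder linL1 maps W0 zz])
  have dk: "(deriv ^^ k) (hk 0) t = hk k t" for k t
    by (rule taylor_iter[of UNIV hk]) (auto intro: hd)
  obtain K where K: "\<forall>k\<ge>K. \<forall>n. \<forall>x\<in>GW n. w' ((L1 ^^ k) x) = 0"
    using vanish[OF W0 linL1 maps low] by blast
  have hk0: "hk k t = 0" if "k \<ge> K" for k t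
  proof -
    have "supp GW (\<lambda>x. w' ((L1 ^^ k) x)) = {}" using K that by (auto simp: supp_def)
    then show ?thesis by (simp add: hk_def pairing_supp)
  qed
  have hol: "hk 0 holomorphic_on ball 0 (norm z + 1)"
  proof (rule holomorphic_onI)
    fix x show "hk 0 field_differentiable at x within ball 0 (norm z + 1)"
      using hd[of 0 x] unfolding field_differentiable_def by (blast intro: has_field_derivative_at_within)
  qed
  have "(\<lambda>n. (deriv ^^ n) (hk 0) 0 / fact n * (z - 0) ^ n) sums hk 0 z"
    by (rule holomorphic_power_series[OF hol]) simp
  then have s1: "(\<lambda>n. hk n 0 / fact n * z ^ n) sums hk 0 z" by (simp add: dk)
  have s2: "(\<lambda>n. hk n 0 / fact n * z ^ n) sums (\<Sum>n\<in>{..<K}. hk n 0 / fact n * z ^ n)"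
    by (rule sums_finite) (auto simp: hk0)
  have rhs: "pairing GW w' (Phi v (\<chi> j. zz $ j + z)) = (\<Sum>n\<in>{..<K}. hk n 0 / fact n * z ^ n)"
  proof -
    have "(\<chi> j. zz $ j + z) = zz + (\<chi> j. z)" by (simp add: vec_eq_iff)
    then have "pairing GW w' (Phi v (\<chi> j. zz $ j + z)) = hk 0 z" by (simp add: hk_def)
    then show ?thesis using sums_unique2[OF s1 s2] by simp
  qed
  have l1: "Vector_Spaces.linear sW (*) w'" using W0 by (simp add: in_Wdual_def)
  obtain N :: real where N: "\<forall>n. Re n < N \<longrightarrow> GW n = {0}" using low by blast
  define X where "X = Phi v zz"
  have X: "in_Wbar GW X" using codom[of v] zz unfolding X_def in_Wtilde_def by blast
  define T where "T n = {k::nat. X (n - of_nat k) \<noteq> 0}" for n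
  have fT: "finite (T n)" for n
  proof -
    have "T n \<subseteq> {..nat \<lceil>Re n - N\<rceil>}"
    proof
      fix k assume k: "k \<in> T n"
      have "\<not> Re (n - of_nat k) < N"
      proof
        assume "Re (n - of_nat k) < N"
        then have "GW (n - of_nat k) = {0}" using N by blast
        then show False using k X unfolding T_def in_Wbar_def by blast
      qed
      then show "k \<in> {..nat \<lceil>Re n - N\<rceil>}" by simp linarith
    qed
    then show ?thesis by (rule finite_subset) simp
  qed
  define G where "G n k = z ^ k / fact k * w' ((L1 ^^ k) (X (n - of_nat k)))" for n k
  have inner: "(\<Sum>k\<in>T n. G n k) = (\<Sum>k<K. G n k)" for n
  proof -
    have "(\<Sum>k\<in>T n. G n k) = (\<Sum>k\<in>T n \<inter> {..<K}. G n k)"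
    proof (rule sum.mono_neutral_right[OF fT])
      show "\<forall>i\<in>T n - T n \<inter> {..<K}. G n i = 0"
      proof
        fix i assume "i \<in> T n - T n \<inter> {..<K}"
        then have "i \<ge> K" by auto
        moreover have "X (n - of_nat i) \<in> GW (n - of_nat i)" using X by (simp add: in_Wbar_def)
        ultimately have "w' ((L1 ^^ i) (X (n - of_nat i))) = 0" using K by blast
        then show "G n i = 0" by (simp add: G_def)
      qed
    qed auto
    also have "\<dots> = (\<Sum>k<K. G n k)"
    proof (rule sum.mono_neutral_left)
      show "\<forall>i\<in>{..<K} - T n \<inter> {..<K}. G n i = 0"
        unfolding G_def T_def by (auto simp: lin_zero[OF lin_funpow[OF linL1]] lin_zero[OF l1])
    qed auto
    finally show ?thesis .
  qed
  have "pairing GW w' (expLbar sW L1 z X) =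
      (\<Sum>n\<in>supp GW w'. w' (\<Sum>k\<in>T n. sW (z ^ k / fact k) ((L1 ^^ k) (X (n - of_nat k)))))"
    by (simp add: pairing_supp expLbar_def T_def)
  also have "\<dots> = (\<Sum>n\<in>supp GW w'. \<Sum>k\<in>T n. G n k)"
    by (simp add: lin_sum[OF l1] lin_scale[OF l1] G_def)
  also have "\<dots> = (\<Sum>n\<in>supp GW w'. \<Sum>k<K. G n k)" by (simp add: inner)
  also have "\<dots> = (\<Sum>k<K. \<Sum>n\<in>supp GW w'. G n k)" by (rule sum.swap)
  also have "\<dots> = (\<Sum>k<K. z ^ k / fact k * (\<Sum>n\<in>supp GW w'. w' ((L1 ^^ k) (X (n - of_nat k)))))"
    by (simp add: G_def sum_distrib_left)
  also have "\<dots> = (\<Sum>k<K. z ^ k / fact k * pairing GW (\<lambda>x. w' ((L1 ^^ k) x)) X)"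
    by (simp add: pairing_shift[OF W0 linL1 maps X])
  also have "\<dots> = (\<Sum>k<K. hk k 0 / fact k * z ^ k)"
  proof (rule sum.cong[OF refl])
    fix k
    have "zz + (\<chi> j. 0) = zz" by (simp add: vec_eq_iff)
    then show "z ^ k / fact k * pairing GW (\<lambda>x. w' ((L1 ^^ k) x)) X = hk k 0 / fact k * z ^ k"
      by (simp add: hk_def X_def)
  qed
  finally show ?thesis using rhs by (simp add: X_def)
qed

lemma partB:
  fixes sW :: "complex \<Rightarrow> 'w::ab_group_add \<Rightarrow> 'w" and GW :: "complex \<Rightarrow> 'w set"
    and Phi :: "'v ^ 'n::finite \<Rightarrow> complex ^ 'n \<Rightarrow> complex \<Rightarrow> 'w"
  assumes Lder: "L_derivative_property sW GW LV L1 Phi"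
    and W0: "in_Wdual sW GW w'" and zz: "zz \<in> Fconf"
  shows "(let g = (\<lambda>t. pairing GW w' (Phi v (vupd zz i (zz $ i + t))));
             a = (\<lambda>k. pairing GW w' (Phi (vupd v i ((LV ^^ k) (v $ i))) zz) / fact k)
         in (\<forall>k. (deriv ^^ k) g 0 / fact k = a k) \<and>
            (\<forall>z. (\<forall>j k. j \<noteq> k \<longrightarrow> norm z < norm (zz $ j - zz $ k)) \<longrightarrow>
                 summable (\<lambda>k. norm (a k * z ^ k)) \<and> (\<lambda>k. a k * z ^ k) sums g z))"
proof -
  define g where "g = (\<lambda>t. pairing GW w' (Phi v (vupd zz i (zz $ i + t))))"
  define a where "a = (\<lambda>k. pairing GW w' (Phi (vupd v i ((LV ^^ k) (v $ i))) zz) / fact k)"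
  define gk where "gk k t = pairing GW w' (Phi (vupd v i ((LV ^^ k) (v $ i))) (vupd zz i (zz $ i + t)))" for k t
  define D where "D = {t. vupd zz i (zz $ i + t) \<in> Fconf}"
  have veq: "vupd zz i (zz $ i + t) = zz + (\<chi> j. if j = i then t else 0)" for t
    by (simp add: vupd_def vec_eq_iff)
  have oD: "open D"
  proof -
    have "D = (\<lambda>t. zz + (\<chi> j. if j = i then t else 0)) -` Fconf" by (auto simp: D_def veq)
    also have "open \<dots>"
    proof (rule continuous_open_vimage[OF open_Fconf])
      fix x :: complex
      show "continuous (at x) (\<lambda>t. zz + (\<chi> j. if j = i then t else 0))"
        by (intro continuous_add continuous_const linear_continuous_at bl_chi)
    qed
    finally show ?thesis .
  qed
  have hd: "(gk k has_field_derivative gk (Suc k) t) (at t)" if t: "t \<in> D" for k t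
  proof -
    define v' where "v' = vupd v i ((LV ^^ k) (v $ i))"
    define z where "z = vupd zz i (zz $ i + t)"
    have z: "z \<in> Fconf" using t by (simp add: D_def z_def)
    have "((\<lambda>s. pairing GW w' (Phi v' (vupd z i s))) has_field_derivative
             pairing GW w' (Phi (vupd v' i (LV (v' $ i))) z)) (at (z $ i))"
      using Lder W0 z unfolding L_derivative_property_def by blast
    then have "((\<lambda>s. pairing GW w' (Phi v' (vupd zz i s))) has_field_derivative gk (Suc k) t) (at (t + zz $ i))"
      by (simp add: z_def v'_def gk_def vupd_vupd vupd_nth add.commute)
    then have "((\<lambda>x. pairing GW w' (Phi v' (vupd zz i (x + zz $ i)))) has_field_derivative gk (Suc k) t) (at t)"
      by (subst (asm) DERIV_shift)
    moreover have "(\<lambda>x. pairing GW w' (Phi v' (vupd zz i (x + zz $ i)))) = gk k"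
      by (rule ext) (simp add: gk_def v'_def add.commute)
    ultimately show ?thesis by simp
  qed
  have dk: "(deriv ^^ k) (gk 0) t = gk k t" if "t \<in> D" for k t
    by (rule taylor_iter[of D gk, OF oD hd that])
  have g0: "gk 0 = g" by (rule ext) (simp add: gk_def g_def vupd_nth_same)
  have zzeq: "vupd zz i (zz $ i + 0) = zz" by (simp add: vupd_nth_same)
  have D0: "0 \<in> D" using zz unfolding D_def by (simp only: zzeq mem_Collect_eq)
  have part1: "(deriv ^^ k) g 0 / fact k = a k" for k
    using dk[OF D0, of k] by (simp add: g0 gk_def a_def vupd_nth_same)
  have part2: "summable (\<lambda>k. norm (a k * z ^ k)) \<and> (\<lambda>k. a k * z ^ k) sums g z"
    if zc: "\<forall>j k. j \<noteq> k \<longrightarrow> norm z < norm (zz $ j - zz $ k)" for z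
  proof -
    define M where "M = (\<lambda>p. norm (zz $ fst p - zz $ snd p)) ` {p. fst p \<noteq> snd p}"
    have fM: "finite M" unfolding M_def by (rule finite_imageI, rule finite_subset[of _ UNIV]) auto
    define m where "m = Min (insert (norm z + 2) M)"
    have mgt: "norm z < m" unfolding m_def using fM zc by (auto simp: Min_gr_iff M_def)
    have mle: "m \<le> norm (zz $ j - zz $ k)" if "j \<noteq> k" for j k
    proof -
      have "norm (zz $ j - zz $ k) \<in> M" unfolding M_def using that by (intro image_eqI[where x="(j,k)"]) auto
      then show ?thesis unfolding m_def using fM by simp
    qed
    define r where "r = (norm z + m) / 2"
    have zr: "norm z < r" and rm: "r < m" using mgt by (simp_all add: r_def)
    have ballD: "ball 0 r \<subseteq> D"
    proof
      fix t :: complex assume "t \<in> ball 0 r"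
      then have tr: "norm t < r" by simp
      have ne: "zz $ i + t \<noteq> zz $ k" if "k \<noteq> i" for k
      proof
        assume "zz $ i + t = zz $ k"
        then have "t = zz $ k - zz $ i" by (simp add: algebra_simps)
        then have "norm t \<ge> m" using mle[of k i] that by simp
        then show False using tr rm by simp
      qed
      show "t \<in> D" unfolding D_def Fconf_def
      proof (intro CollectI allI impI)
        fix j k :: 'n assume jk: "j \<noteq> k"
        show "vupd zz i (zz $ i + t) $ j \<noteq> vupd zz i (zz $ i + t) $ k"
          using ne[of k] ne[of j] jk zz by (auto simp: vupd_def Fconf_def)
      qed
    qed
    have hol: "g holomorphic_on ball 0 r"
    proof (rule holomorphic_onI)
      fix x :: complex assume "x \<in> ball 0 r"
      then have "x \<in> D" using ballD by blast
      then have "(g has_field_derivative gk 1 x) (at x)" using hd[of x 0] by (simp add: g0)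
      then show "g field_differentiable at x within ball 0 r"
        unfolding field_differentiable_def by (blast intro: has_field_derivative_at_within)
    qed
    have ser: "(\<lambda>n. a n * w ^ n) sums g w" if "w \<in> ball 0 r" for w
    proof -
      have "(\<lambda>n. (deriv ^^ n) g 0 / fact n * (w - 0) ^ n) sums g w"
        by (rule holomorphic_power_series[OF hol that])
      then show ?thesis by (simp add: part1)
    qed
    define w where "w = complex_of_real ((norm z + r) / 2)"
    have r0: "0 \<le> r" using zr norm_ge_zero[of z] by (meson less_imp_le order_trans)
    have q0: "(norm z + r) / 2 \<ge> 0" by (intro divide_nonneg_pos add_nonneg_nonneg norm_ge_zero r0) simp
    have nw: "norm w = (norm z + r) / 2" unfolding w_def
      by (simp only: norm_of_real abs_of_nonneg[OF q0])
    have wb: "w \<in> ball 0 r" using nw zr by simp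
    have "summable (\<lambda>n. a n * w ^ n)" using ser[OF wb] by (rule sums_summable)
    then have "summable (\<lambda>n. norm (a n * z ^ n))" by (rule powser_insidea) (simp add: nw zr)
    moreover have "(\<lambda>n. a n * z ^ n) sums g z" using zr by (intro ser) simp
    ultimately show ?thesis by blast
  qed
  show ?thesis unfolding Let_def g_def[symmetric] a_def[symmetric] using part1 part2 by blast
qed

theorem proposition3p4:
  fixes sV :: "complex \<Rightarrow> 'v::ab_group_add \<Rightarrow> 'v" and GV :: "int \<Rightarrow> 'v set"
    and Y :: "'v \<Rightarrow> 'v \<Rightarrow> int \<Rightarrow> 'v" and one :: 'v
    and sW :: "complex \<Rightarrow> 'w::ab_group_add \<Rightarrow> 'w" and GW :: "complex \<Rightarrow> 'w set"
    and YW :: "'v \<Rightarrow> 'w \<Rightarrow> int \<Rightarrow> 'w" and L0 L1 :: "'w \<Rightarrow> 'w"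
    and Phi :: "'v ^ 'n \<Rightarrow> complex ^ 'n \<Rightarrow> complex \<Rightarrow> 'w"
  assumes VA: "grading_restricted_VA sV GV Y one"
    and MOD: "grading_restricted_gen_module sV GV Y one sW GW YW L0 L1"
    and lin: "multilinear_Phi sV sW Phi"
    and codom: "\<And>v. in_Wtilde sW GW (Phi v)"
    and Lder: "L_derivative_property sW GW (LVm1 Y one) L1 Phi"
  shows
    "(\<forall>v w' zz z. in_Wdual sW GW w' \<longrightarrow> zz \<in> Fconf \<longrightarrow>
        pairing GW w' (expLbar sW L1 z (Phi v zz)) = pairing GW w' (Phi v (\<chi> j. zz $ j + z)))
   \<and> (\<forall>v w' zz i. in_Wdual sW GW w' \<longrightarrow> zz \<in> Fconf \<longrightarrow>
        (let g = (\<lambda>t. pairing GW w' (Phi v (vupd zz i (zz $ i + t))));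
             a = (\<lambda>k. pairing GW w' (Phi (vupd v i ((LVm1 Y one ^^ k) (v $ i))) zz) / fact k)
         in (\<forall>k. (deriv ^^ k) g 0 / fact k = a k) \<and>
            (\<forall>z. (\<forall>j k. j \<noteq> k \<longrightarrow> norm z < norm (zz $ j - zz $ k)) \<longrightarrow>
                 summable (\<lambda>k. norm (a k * z ^ k)) \<and> (\<lambda>k. a k * z ^ k) sums g z)))"
proof -
  have linL1: "Vector_Spaces.linear sW sW L1"
    using MOD unfolding grading_restricted_gen_module_def by (elim conjE) assumption
  have maps: "\<forall>n. L1 ` GW n \<subseteq> GW (n + 1)"
    using MOD unfolding grading_restricted_gen_module_def by (elim conjE) assumption
  have low: "\<exists>N::real. \<forall>n. Re n < N \<longrightarrow> GW n = {0}"
    using MOD unfolding grading_restricted_gen_module_def by (elim conjE) assumption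
  show ?thesis
    apply (intro conjI allI impI)
     apply (erule (1) partA[OF codom Lder linL1 maps low])
    apply (erule (1) partB[OF Lder])
    done
qed

end
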